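(* For $t\ge 0$ and $f\in\mathrm{Lip}_{[2]}(\mathbb{R})$ define $\mathbf{P}^0_t f(x)=\mathbb{E}\big[f\big(\max(x-t,\ Z+\log(1-e^{-t}))\big)\big]$, $x\in\mathbb{R}$, where $Z$ has the standard Gumbel distribution $\mu$ (with the convention $\log 0=-\infty$, so $\mathbf{P}^0_0 f=f$). Then $(\mathbf{P}^0_t)_{t\ge0}$ is a semi-group of linear operators on $\mathrm{Lip}_{[2]}(\mathbb{R})$, i.e. $\mathbf{P}^0_0=\mathrm{Id}$ and $\mathbf{P}^0_t\circ\mathbf{P}^0_s=\mathbf{P}^0_{t+s}$ for all $t,s\ge0$; it is ergodic, in the sense that $\lim_{t\to\infty}\mathbf{P}^0_t f(x)=\int_{\mathbb{R}} f\,d\mu$ for every $x\in\mathbb{R}$ and $f\in\mathrm{Lip}_{[2]}(\mathbb{R})$; and $\mu$ is an invariant (stationary) measure: $\mathbb{E}[\mathbf{P}^0_t f(Z)]=\mathbb{E}[f(Z)]$ for all $t\ge0$.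
   Context: The standard Gumbel distribution $\mu=\mathcal{G}(0,1)$ has density $x\mapsto e^{-(x+e^{-x})}$ on $\mathbb{R}$. $\mathrm{Lip}_{[2]}(\mathbb{R})$ is the set of Lipschitz functions $f:\mathbb{R}\to\mathbb{R}$ whose derivative $f'$ admits a Lipschitz representative (functions need not be bounded). *)

theory Defs
  imports "HOL-Analysis.Analysis" "HOL-Probability.Probability"
begin

definition gumbel :: "real measure" where
  "gumbel = density lborel (\<lambda>x. ennreal (exp (-(x + exp (-x)))))"

definition Lip2 :: "(real \<Rightarrow> real) set" where
  "Lip2 = {f. (\<exists>L. L-lipschitz_on UNIV f) \<and>
              (\<exists>g. (\<exists>K. K-lipschitz_on UNIV g) \<and>
                   (AE x in lborel. (f has_real_derivative g x) (at x)))}"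

text \<open>The semigroup P^0_t; for t = 0 the convention log 0 = -infinity gives P^0_0 f = f.\<close>
definition P0 :: "real \<Rightarrow> (real \<Rightarrow> real) \<Rightarrow> real \<Rightarrow> real" where
  "P0 t f x = (if t = 0 then f x
     else (\<integral>z. f (max (x - t) (z + ln (1 - exp (-t)))) \<partial>gumbel))"

end

theory Submission
  imports Defs "HOL-Real_Asymp.Real_Asymp"
begin


abbreviation rho :: "real \<Rightarrow> real" where "rho x \<equiv> exp (-(x + exp (-x)))"

lemma sets_gumbel[simp, measurable_cong]: "sets gumbel = sets borel"
  by (simp add: gumbel_def)

lemma space_gumbel[simp]: "space gumbel = UNIV"
  by (simp add: gumbel_def)

lemma measurable_gumbel[simp]: "measurable gumbel M = measurable borel M"
  by (rule measurable_cong_sets) auto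

lemma rho_eq: "rho x = exp (-x) * exp (- exp (-x))"
  by (subst exp_add[symmetric]) simp

lemma deriv_G: "((\<lambda>x. exp (- exp (- x))) has_real_derivative rho x) (at x)"
  unfolding rho_eq by (auto intro!: derivative_eq_intros)

lemma G_top: "((\<lambda>x::real. exp (- exp (- x))) \<longlongrightarrow> 1) at_top"
proof -
  have "((\<lambda>x::real. exp (- x)) \<longlongrightarrow> 0) at_top"
    by (rule filterlim_compose[OF exp_at_bot filterlim_uminus_at_bot_at_top])
  then have "((\<lambda>x::real. exp (- exp (- x))) \<longlongrightarrow> exp (- 0)) at_top"
    by (intro tendsto_intros)
  then show ?thesis by simp
qed

lemma G_bot: "((\<lambda>x::real. exp (- exp (- x))) \<longlongrightarrow> 0) at_bot"
proof -
  have "filterlim (\<lambda>x::real. exp (- x)) at_top at_bot"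
    by (rule filterlim_compose[OF exp_at_top filterlim_uminus_at_top_at_bot])
  then have "filterlim (\<lambda>x::real. - exp (- x)) at_bot at_bot"
    by (rule filterlim_compose[OF filterlim_uminus_at_bot_at_top])
  then show ?thesis
    by (rule filterlim_compose[OF exp_at_bot])
qed

lemma nn_integral_FTC_real:
  fixes f F :: "real \<Rightarrow> real"
  assumes fb: "f \<in> borel_measurable borel"
  assumes f: "\<And>x. DERIV F x :> f x" and nonneg: "\<And>x. 0 \<le> f x"
  assumes bot: "(F \<longlongrightarrow> 0) at_bot" and top: "(F \<longlongrightarrow> T) at_top"
  shows "(\<integral>\<^sup>+x. ennreal (f x) \<partial>lborel) = T"
proof -
  let ?g = "\<lambda>(n::nat) x. ennreal (f x) * indicator {- real n ..} x"
  have "(\<lambda>n. integral\<^sup>N lborel (?g n)) \<longlonglongrightarrow> (\<integral>\<^sup>+x. ennreal (f x) \<partial>lborel)"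
  proof (rule nn_integral_LIMSEQ)
    show "incseq ?g"
      by (auto simp: incseq_def le_fun_def split: split_indicator intro!: mult_left_mono)
    show "?g n \<in> borel_measurable lborel" for n using fb by measurable
    show "(\<lambda>n. ?g n x) \<longlonglongrightarrow> ennreal (f x)" for x
    proof (rule tendsto_eventually)
      obtain n :: nat where "- x \<le> real n" using real_arch_simple by blast
      then show "\<forall>\<^sub>F n in sequentially. ?g n x = ennreal (f x)"
        unfolding eventually_sequentially
        by (intro exI[of _ n]) (auto split: split_indicator)
    qed
  qed
  moreover have "integral\<^sup>N lborel (?g n) = ennreal (T - F (- real n))" for n
    by (rule nn_integral_FTC_atLeast[OF fb f nonneg top])
  moreover have "(\<lambda>n. ennreal (T - F (- real n))) \<longlonglongrightarrow> ennreal T"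
  proof -
    have "filterlim (\<lambda>n::nat. - real n) at_bot sequentially"
      by (rule filterlim_compose[OF filterlim_uminus_at_bot_at_top filterlim_real_sequentially])
    then have "(\<lambda>n. F (- real n)) \<longlonglongrightarrow> 0"
      by (rule filterlim_compose[OF bot])
    then show ?thesis
      by (intro tendsto_ennrealI) (auto intro!: tendsto_eq_intros)
  qed
  ultimately show ?thesis
    using LIMSEQ_unique by fastforce
qed

lemma emeasure_gumbel_atLeast: "emeasure gumbel {y..} = ennreal (1 - exp (- exp (- y)))"
proof -
  have "emeasure gumbel {y..} = (\<integral>\<^sup>+x. ennreal (rho x) * indicator {y..} x \<partial>lborel)"
    unfolding gumbel_def by (subst emeasure_density) auto
  also have "\<dots> = ennreal (1 - exp (- exp (- y)))"
  proof (rule nn_integral_FTC_atLeast[where F="\<lambda>x. exp (- exp (- x))" and T=1])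
    show "((\<lambda>x::real. exp (- exp (- x))) \<longlongrightarrow> 1) at_top" by (rule G_top)
  qed (use deriv_G in auto)
  finally show ?thesis .
qed

lemma emeasure_gumbel_UNIV: "emeasure gumbel UNIV = 1"
proof -
  have "emeasure gumbel UNIV = (\<integral>\<^sup>+x. ennreal (rho x) \<partial>lborel)"
    unfolding gumbel_def by (subst emeasure_density) auto
  also have "\<dots> = ennreal 1"
  proof (rule nn_integral_FTC_real[where F="\<lambda>x. exp (- exp (- x))"])
    show "((\<lambda>x::real. exp (- exp (- x))) \<longlongrightarrow> 1) at_top" by (rule G_top)
    show "((\<lambda>x::real. exp (- exp (- x))) \<longlongrightarrow> 0) at_bot" by (rule G_bot)
  qed (use deriv_G in auto)
  finally show ?thesis by simp
qed

lemma prob_space_gumbel: "prob_space gumbel"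
  by (rule prob_spaceI) (simp add: emeasure_gumbel_UNIV)

interpretation G: prob_space gumbel by (rule prob_space_gumbel)

lemma emeasure_gumbel_singleton: "emeasure gumbel {y} = 0"
proof -
  have "{y} \<in> null_sets lborel" by (intro countable_imp_null_set_lborel) auto
  then have "AE x in lborel. x \<notin> {y}" by (rule AE_not_in)
  then have "{y} \<in> null_sets gumbel" unfolding gumbel_def
    by (subst null_sets_density_iff) (auto elim: eventually_mono)
  then show ?thesis by auto
qed

lemma measure_gumbel_lessThan: "measure gumbel {..<y} = exp (- exp (- y))"
proof -
  have "{..<y} = UNIV - {y..}" by auto
  then have "measure gumbel {..<y} = 1 - measure gumbel {y..}"
    using G.prob_compl[of "{y..}"] by simp
  also have "measure gumbel {y..} = 1 - exp (- exp (- y))"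
    unfolding measure_def emeasure_gumbel_atLeast by simp
  finally show ?thesis by simp
qed

lemma measure_gumbel_atMost: "measure gumbel {..y} = exp (- exp (- y))"
proof -
  have "{..y} = {..<y} \<union> {y}" by auto
  then have "measure gumbel {..y} = measure gumbel {..<y} + measure gumbel {y}"
    using G.finite_measure_Union[of "{..<y}" "{y}"] by simp
  then show ?thesis
    using emeasure_gumbel_singleton measure_gumbel_lessThan by (simp add: measure_def)
qed


lemma integrable_rho_exp: "integrable lborel (\<lambda>x. rho x * exp (- x))"
proof (rule integrableI_nn_integral_finite[where x=1])
  show "(\<lambda>x. rho x * exp (- x)) \<in> borel_measurable lborel" by measurable
  show "AE x in lborel. 0 \<le> rho x * exp (- x)" by simp
  let ?F = "\<lambda>x::real. (1 + exp (- x)) * exp (- exp (- x))"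
  show "(\<integral>\<^sup>+x. ennreal (rho x * exp (- x)) \<partial>lborel) = ennreal 1"
  proof (rule nn_integral_FTC_real[where F="?F"])
    show "(\<lambda>x. rho x * exp (- x)) \<in> borel_measurable borel" by measurable
    show "DERIV ?F x :> rho x * exp (- x)" for x
      unfolding rho_eq by (auto intro!: derivative_eq_intros simp: algebra_simps)
    show "0 \<le> rho x * exp (- x)" for x by simp
    have "((\<lambda>u::real. (1 + u) * exp (- u)) \<longlongrightarrow> 0) at_top" by real_asymp
    moreover have "filterlim (\<lambda>x::real. exp (- x)) at_top at_bot"
      by (rule filterlim_compose[OF exp_at_top filterlim_uminus_at_top_at_bot])
    ultimately show "(?F \<longlongrightarrow> 0) at_bot"
      by (rule filterlim_compose)
    have "((\<lambda>x::real. exp (- x)) \<longlongrightarrow> 0) at_top"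
      by (rule filterlim_compose[OF exp_at_bot filterlim_uminus_at_bot_at_top])
    then have "(?F \<longlongrightarrow> (1 + 0) * exp (- 0)) at_top"
      by (intro tendsto_intros)
    then show "(?F \<longlongrightarrow> 1) at_top" by simp
  qed
qed

lemma integrable_xexp: "integrable lborel (\<lambda>x::real. x * exp (- x) * indicator {0..} x)"
proof (rule integrableI_nn_integral_finite[where x=1])
  show "(\<lambda>x::real. x * exp (- x) * indicator {0..} x) \<in> borel_measurable lborel" by measurable
  show "AE x in lborel. 0 \<le> (x::real) * exp (- x) * indicator {0..} x"
    by (auto split: split_indicator)
  have "(\<integral>\<^sup>+x. ennreal (x * exp (- x) * indicator {0..} x) \<partial>lborel)
      = (\<integral>\<^sup>+x. ennreal (x^1 * exp (- x)) * indicator {0 ..} x \<partial>lborel)"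
    by (intro nn_integral_cong) (auto split: split_indicator)
  also have "\<dots> = ennreal 1"
    using nn_intergal_power_times_exp_Ici[of 1] by simp
  finally show "(\<integral>\<^sup>+x. ennreal (x * exp (- x) * indicator {0..} x) \<partial>lborel) = ennreal 1" .
qed

lemma integrable_gumbel_abs: "integrable gumbel (\<lambda>z. \<bar>z\<bar>)"
proof -
  have "integrable lborel (\<lambda>x. rho x * \<bar>x\<bar>)"
  proof (rule Bochner_Integration.integrable_bound)
    show "integrable lborel (\<lambda>x. rho x * exp (- x) + x * exp (- x) * indicator {0..} x)"
      by (intro Bochner_Integration.integrable_add integrable_rho_exp integrable_xexp)
    show "(\<lambda>x. rho x * \<bar>x\<bar>) \<in> borel_measurable lborel" by measurable
    show "AE x in lborel. norm (rho x * \<bar>x\<bar>) \<le>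
            norm (rho x * exp (- x) + x * exp (- x) * indicator {0..} x)"
    proof (rule AE_I2)
      fix x :: real
      have r: "rho x \<le> exp (- x)"
        unfolding rho_eq by (simp add: mult_left_le)
      show "norm (rho x * \<bar>x\<bar>) \<le> norm (rho x * exp (- x) + x * exp (- x) * indicator {0..} x)"
      proof (cases "x < 0")
        case True
        have "- x \<le> exp (- x)" using exp_ge_add_one_self[of "- x"] by linarith
        then have "rho x * \<bar>x\<bar> \<le> rho x * exp (- x)" using True
          by (intro mult_left_mono) auto
        moreover have "0 \<le> rho x * \<bar>x\<bar>" by simp
        ultimately show ?thesis using True by (simp add: abs_mult)
      next
        case False
        have "rho x * \<bar>x\<bar> \<le> x * exp (- x)" using False r
          by (simp add: mult.commute mult_left_mono)
        moreover have "0 \<le> rho x * exp (- x)" by simp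
        moreover have e1: "norm (rho x * \<bar>x\<bar>) = rho x * x" using False by simp
        moreover have e2: "norm (rho x * exp (- x) + x * exp (- x) * indicator {0..} x)
            = rho x * exp (- x) + x * exp (- x)" using False
          by (simp add: indicator_def abs_of_nonneg)
        moreover have ax: "\<bar>x\<bar> = x" using False by simp
        ultimately show ?thesis unfolding e1 e2 ax by (smt (verit) mult.commute)
      qed
    qed
  qed
  then show ?thesis
    unfolding gumbel_def by (subst integrable_density) auto
qed

lemma lip_measurable[measurable_dest]:
  "L-lipschitz_on UNIV (h::real \<Rightarrow> real) \<Longrightarrow> h \<in> borel_measurable borel"
  by (intro borel_measurable_continuous_onI lipschitz_on_continuous_on)

lemma lip_bound:
  assumes "L-lipschitz_on UNIV (h::real \<Rightarrow> real)"
  shows "\<bar>h z\<bar> \<le> \<bar>h 0\<bar> + L * \<bar>z\<bar>"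
  using lipschitz_onD[OF assms, of z 0] by (auto simp: dist_real_def)

lemma integrable_gumbel_lip:
  assumes h: "L-lipschitz_on UNIV (h::real \<Rightarrow> real)"
  shows "integrable gumbel h"
proof (rule Bochner_Integration.integrable_bound)
  show "integrable gumbel (\<lambda>z. \<bar>h 0\<bar> + L * \<bar>z\<bar>)"
    by (intro Bochner_Integration.integrable_add integrable_mult_right integrable_gumbel_abs) auto
  show "h \<in> borel_measurable gumbel" using h by simp
  have "0 \<le> L" using h by (rule lipschitz_on_nonneg)
  then show "AE x in gumbel. norm (h x) \<le> norm (\<bar>h 0\<bar> + L * \<bar>x\<bar>)"
    using lip_bound[OF h] by auto
qed


interpretation GG: pair_prob_space gumbel gumbel
  by unfold_locales

lemma lip_comp1:
  assumes h: "L-lipschitz_on UNIV (h::real \<Rightarrow> real)" and phi: "\<And>x y. \<bar>phi x - phi y\<bar> \<le> \<bar>x - y\<bar>"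
  shows "L-lipschitz_on UNIV (\<lambda>z. h (phi z))"
proof (rule lipschitz_onI)
  show L: "0 \<le> L" using h by (rule lipschitz_on_nonneg)
  fix x y :: real
  have "dist (h (phi x)) (h (phi y)) \<le> L * dist (phi x) (phi y)"
    using lipschitz_onD[OF h] by simp
  also have "\<dots> \<le> L * dist x y"
    using phi[of x y] L by (simp add: dist_real_def mult_left_mono)
  finally show "dist (h (phi x)) (h (phi y)) \<le> L * dist x y" .
qed

lemma lip_shift: "L-lipschitz_on UNIV (h::real \<Rightarrow> real) \<Longrightarrow> L-lipschitz_on UNIV (\<lambda>z. h (z + d))"
  by (rule lip_comp1) auto

lemma lip_maxshift: "L-lipschitz_on UNIV (h::real \<Rightarrow> real) \<Longrightarrow> L-lipschitz_on UNIV (\<lambda>z. h (max c (z + d)))"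
  by (rule lip_comp1) (auto simp: max_def)

lemma lip_maxshift2: "L-lipschitz_on UNIV (h::real \<Rightarrow> real) \<Longrightarrow> L-lipschitz_on UNIV (\<lambda>z. h (max (z + d) c))"
  by (rule lip_comp1) (auto simp: max_def)

lemma gumbel_max_distr:
  "distr (gumbel \<Otimes>\<^sub>M gumbel) borel (\<lambda>p. max (fst p + a) (snd p + b))
     = distr gumbel borel (\<lambda>z. z + ln (exp a + exp b))"
proof (rule cdf_unique)
  let ?k = "ln (exp a + exp b)"
  show "real_distribution (distr (gumbel \<Otimes>\<^sub>M gumbel) borel (\<lambda>p. max (fst p + a) (snd p + b)))"
    by (intro GG.real_distribution_distr) measurable
  show "real_distribution (distr gumbel borel (\<lambda>z. z + ?k))"
    by (intro G.real_distribution_distr) simp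
  show "cdf (distr (gumbel \<Otimes>\<^sub>M gumbel) borel (\<lambda>p. max (fst p + a) (snd p + b)))
      = cdf (distr gumbel borel (\<lambda>z. z + ?k))"
  proof
    fix y :: real
    have "cdf (distr (gumbel \<Otimes>\<^sub>M gumbel) borel (\<lambda>p. max (fst p + a) (snd p + b))) y
        = measure (gumbel \<Otimes>\<^sub>M gumbel) ({..y-a} \<times> {..y-b})"
      unfolding cdf_def
      by (subst measure_distr) (auto intro!: arg_cong2[where f=measure] simp: space_pair_measure)
    also have "\<dots> = measure gumbel {..y-a} * measure gumbel {..y-b}"
      by (simp add: measure_def G.emeasure_pair_measure_Times enn2real_mult)
    also have "\<dots> = exp (- exp (- (y - a))) * exp (- exp (- (y - b)))"
      by (simp add: measure_gumbel_atMost)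
    also have "\<dots> = exp (- exp (- (y - ?k)))"
    proof -
      have ek: "exp ?k = exp a + exp b" by (simp add: add_pos_pos)
      have "exp (- (y - ?k)) = exp ?k / exp y" by (simp add: exp_diff)
      also have "\<dots> = exp (- (y - a)) + exp (- (y - b))"
        unfolding ek by (simp add: exp_diff add_divide_distrib)
      finally have "exp (- (y - ?k)) = exp (- (y - a)) + exp (- (y - b))" .
      then show ?thesis by (simp add: exp_add[symmetric])
    qed
    also have "\<dots> = measure gumbel {..y-?k}"
      by (simp add: measure_gumbel_atMost)
    also have "\<dots> = cdf (distr gumbel borel (\<lambda>z. z + ?k)) y"
      unfolding cdf_def
      by (subst measure_distr) (auto intro!: arg_cong2[where f=measure])
    finally show "cdf (distr (gumbel \<Otimes>\<^sub>M gumbel) borel (\<lambda>p. max (fst p + a) (snd p + b))) y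
      = cdf (distr gumbel borel (\<lambda>z. z + ?k)) y" .
  qed
qed

lemma gumbel_max_integral:
  assumes h: "L-lipschitz_on UNIV (h::real \<Rightarrow> real)"
  shows "(\<integral>z1. (\<integral>z2. h (max (z1 + a) (z2 + b)) \<partial>gumbel) \<partial>gumbel)
      = (\<integral>z. h (z + ln (exp a + exp b)) \<partial>gumbel)"
proof -
  let ?k = "ln (exp a + exp b)"
  let ?m = "\<lambda>p::real \<times> real. max (fst p + a) (snd p + b)"
  have hm[measurable]: "h \<in> borel_measurable borel" using h by simp
  have "integrable gumbel (\<lambda>z. h (z + ?k))"
    by (rule integrable_gumbel_lip[OF lip_shift[OF h]])
  then have "integrable (distr gumbel borel (\<lambda>z. z + ?k)) h"
    by (subst integrable_distr_eq) auto
  then have "integrable (distr (gumbel \<Otimes>\<^sub>M gumbel) borel ?m) h"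
    by (simp add: gumbel_max_distr)
  then have int: "integrable (gumbel \<Otimes>\<^sub>M gumbel) (\<lambda>p. h (?m p))"
    by (subst (asm) integrable_distr_eq) auto
  have "(\<integral>z1. (\<integral>z2. h (max (z1 + a) (z2 + b)) \<partial>gumbel) \<partial>gumbel)
      = integral\<^sup>L (gumbel \<Otimes>\<^sub>M gumbel) (\<lambda>p. h (?m p))"
    using GG.integral_fst'[OF int] by simp
  also have "\<dots> = integral\<^sup>L (distr (gumbel \<Otimes>\<^sub>M gumbel) borel ?m) h"
    by (subst integral_distr) auto
  also have "\<dots> = integral\<^sup>L (distr gumbel borel (\<lambda>z. z + ?k)) h"
    by (simp add: gumbel_max_distr)
  also have "\<dots> = (\<integral>z. h (z + ?k) \<partial>gumbel)"
    by (subst integral_distr) auto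
  finally show ?thesis .
qed




lemma Lip2_lip: "f \<in> Lip2 \<Longrightarrow> \<exists>L. L-lipschitz_on UNIV f"
  by (auto simp: Lip2_def)

lemma P0_pos: "t \<noteq> 0 \<Longrightarrow> P0 t f x = (\<integral>z. f (max (x - t) (z + ln (1 - exp (-t)))) \<partial>gumbel)"
  by (simp add: P0_def)

lemma P0_zero: "P0 0 f = f"
  by (simp add: P0_def fun_eq_iff)

lemma exp_c: "0 < t \<Longrightarrow> exp (ln (1 - exp (- t))) = 1 - exp (- (t::real))"
  by simp

lemma P0_linear:
  assumes f: "f \<in> Lip2" and g: "g \<in> Lip2"
  shows "P0 t (\<lambda>x. a * f x + b * g x) = (\<lambda>x. a * P0 t f x + b * P0 t g x)"
proof
  fix x
  obtain L where L: "L-lipschitz_on UNIV f" using Lip2_lip[OF f] by blast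
  obtain K where K: "K-lipschitz_on UNIV g" using Lip2_lip[OF g] by blast
  show "P0 t (\<lambda>x. a * f x + b * g x) x = a * P0 t f x + b * P0 t g x"
  proof (cases "t = 0")
    case True then show ?thesis by (simp add: P0_def)
  next
    case False
    let ?c = "ln (1 - exp (-t))"
    have i1: "integrable gumbel (\<lambda>z. f (max (x - t) (z + ?c)))"
      by (rule integrable_gumbel_lip[OF lip_maxshift[OF L]])
    have i2: "integrable gumbel (\<lambda>z. g (max (x - t) (z + ?c)))"
      by (rule integrable_gumbel_lip[OF lip_maxshift[OF K]])
    show ?thesis using False i1 i2 by (simp add: P0_pos)
  qed
qed

lemma P0_semigroup:
  assumes f: "f \<in> Lip2" and t: "t \<ge> 0" and s: "s \<ge> 0"
  shows "P0 t (P0 s f) = P0 (t + s) f"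
proof (cases "t = 0 \<or> s = 0")
  case True then show ?thesis by (auto simp: P0_zero)
next
  case False
  then have tp: "t > 0" and sp: "s > 0" using t s by auto
  obtain L where L: "L-lipschitz_on UNIV f" using Lip2_lip[OF f] by blast
  let ?ct = "ln (1 - exp (-t))" and ?cs = "ln (1 - exp (-s))" and ?cts = "ln (1 - exp (-(t+s)))"
  show ?thesis
  proof
    fix x
    let ?h = "\<lambda>w. f (max (x - t - s) w)"
    have hL: "L-lipschitz_on UNIV ?h"
      by (rule lip_comp1[OF L]) (auto simp: max_def)
    have "P0 t (P0 s f) x = (\<integral>z2. (\<integral>z1. f (max (max (x - t) (z2 + ?ct) - s) (z1 + ?cs)) \<partial>gumbel) \<partial>gumbel)"
      using tp sp by (simp add: P0_pos)
    also have "\<dots> = (\<integral>z2. (\<integral>z1. ?h (max (z2 + (?ct - s)) (z1 + ?cs)) \<partial>gumbel) \<partial>gumbel)"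
      by (intro Bochner_Integration.integral_cong refl arg_cong[where f=f]) (auto simp: max_def)
    also have "\<dots> = (\<integral>z. ?h (z + ln (exp (?ct - s) + exp ?cs)) \<partial>gumbel)"
      by (rule gumbel_max_integral[OF hL])
    also have "ln (exp (?ct - s) + exp ?cs) = ?cts"
    proof -
      have "exp (?ct - s) + exp ?cs = (1 - exp (-t)) * exp (-s) + (1 - exp (-s))"
        by (simp only: exp_diff exp_c[OF tp] exp_c[OF sp]) (simp add: exp_minus divide_inverse)
      also have "\<dots> = 1 - exp (-(t+s))"
        by (simp add: algebra_simps exp_add[symmetric])
      finally show ?thesis by simp
    qed
    also have "(\<integral>z. ?h (z + ?cts) \<partial>gumbel) = P0 (t + s) f x"
      using tp sp by (simp add: P0_pos algebra_simps)
    finally show "P0 t (P0 s f) x = P0 (t + s) f x" .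
  qed
qed

lemma P0_invariant:
  assumes f: "f \<in> Lip2" and t: "t \<ge> 0"
  shows "(\<integral>z. P0 t f z \<partial>gumbel) = (\<integral>z. f z \<partial>gumbel)"
proof (cases "t = 0")
  case True then show ?thesis by (simp add: P0_zero)
next
  case False
  then have tp: "t > 0" using t by auto
  obtain L where L: "L-lipschitz_on UNIV f" using Lip2_lip[OF f] by blast
  let ?c = "ln (1 - exp (-t))"
  have "(\<integral>z. P0 t f z \<partial>gumbel) = (\<integral>z. (\<integral>w. f (max (z + (-t)) (w + ?c)) \<partial>gumbel) \<partial>gumbel)"
    using tp by (simp add: P0_pos)
  also have "\<dots> = (\<integral>z. f (z + ln (exp (-t) + exp ?c)) \<partial>gumbel)"
    by (rule gumbel_max_integral[OF L])
  also have "ln (exp (-t) + exp ?c) = 0"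
    using tp by simp
  finally show ?thesis by simp
qed




lemma c_bounds:
  assumes "1 \<le> (t::real)"
  shows "ln (1 - exp (-1)) \<le> ln (1 - exp (-t))" "ln (1 - exp (-t)) \<le> 0"
proof -
  have e1: "exp (-1::real) < 1" by simp
  have "exp (-t) \<le> exp (-1)" using assms by simp
  moreover have "exp (-t) < 1" using assms by simp
  ultimately show "ln (1 - exp (-1)) \<le> ln (1 - exp (-t))"
    using e1 by (subst ln_le_cancel_iff) auto
  show "ln (1 - exp (-t)) \<le> 0" using \<open>exp (-t) < 1\<close> by simp
qed

lemma max_abs_bound:
  fixes x z c t C :: real
  shows "-C \<le> c \<Longrightarrow> c \<le> 0 \<Longrightarrow> 0 \<le> t \<Longrightarrow> \<bar>max (x - t) (z + c)\<bar> \<le> \<bar>x\<bar> + \<bar>z\<bar> + C"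
  by (auto simp: max_def abs_if)

lemma P0_ergodic:
  assumes f: "f \<in> Lip2"
  shows "((\<lambda>t. P0 t f x) \<longlongrightarrow> (\<integral>z. f z \<partial>gumbel)) at_top"
proof -
  obtain L where L: "L-lipschitz_on UNIV f" using Lip2_lip[OF f] by blast
  have L0: "0 \<le> L" using L by (rule lipschitz_on_nonneg)
  have fm[measurable]: "f \<in> borel_measurable borel" using L by simp
  have fc: "isCont f z" for z
    using lipschitz_on_continuous_on[OF L] by (simp add: continuous_on_eq_continuous_at)
  define C where "C = - ln (1 - exp (-1::real))"
  have C0: "0 \<le> C" using c_bounds(2)[of 1] by (simp add: C_def)
  let ?s = "\<lambda>t z. f (max (x - t) (z + ln (1 - exp (-t))))"
  let ?w = "\<lambda>z. \<bar>f 0\<bar> + L * (\<bar>x\<bar> + \<bar>z\<bar> + C)"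
  have "((\<lambda>t. integral\<^sup>L gumbel (?s t)) \<longlongrightarrow> integral\<^sup>L gumbel f) at_top"
  proof (rule integral_dominated_convergence_at_top[where w="?w"])
    show "f \<in> borel_measurable gumbel" by simp
    show "?s t \<in> borel_measurable gumbel" for t by simp
    show "integrable gumbel ?w"
      by (intro Bochner_Integration.integrable_add integrable_mult_right integrable_gumbel_abs
          integrable_const) auto
    show "AE z in gumbel. ((\<lambda>t. ?s t z) \<longlongrightarrow> f z) at_top"
    proof (rule AE_I2)
      fix z :: real
      have l1: "((\<lambda>t. z + ln (1 - exp (-t))) \<longlongrightarrow> z) at_top" by real_asymp
      have "eventually (\<lambda>t. x - t < z + ln (1 - exp (-t))) at_top" by real_asymp
      then have "eventually (\<lambda>t. z + ln (1 - exp (-t)) = max (x - t) (z + ln (1 - exp (-t)))) at_top"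
        by (rule eventually_mono) auto
      from Lim_transform_eventually[OF l1 this]
      have "((\<lambda>t. max (x - t) (z + ln (1 - exp (-t)))) \<longlongrightarrow> z) at_top" .
      then show "((\<lambda>t. ?s t z) \<longlongrightarrow> f z) at_top"
        by (rule isCont_tendsto_compose[OF fc])
    qed
    show "\<forall>\<^sub>F t in at_top. AE z in gumbel. norm (?s t z) \<le> ?w z"
      using eventually_ge_at_top[of "1::real"]
    proof (rule eventually_mono)
      fix t :: real assume t: "1 \<le> t"
      show "AE z in gumbel. norm (?s t z) \<le> ?w z"
      proof (rule AE_I2)
        fix z :: real
        let ?y = "max (x - t) (z + ln (1 - exp (-t)))"
        have "\<bar>?y\<bar> \<le> \<bar>x\<bar> + \<bar>z\<bar> + C"
          using c_bounds[OF t] t unfolding C_def by (intro max_abs_bound) auto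
        then have "L * \<bar>?y\<bar> \<le> L * (\<bar>x\<bar> + \<bar>z\<bar> + C)" using L0 by (rule mult_left_mono)
        then show "norm (?s t z) \<le> ?w z" using lip_bound[OF L, of ?y] by simp
      qed
    qed
  qed
  moreover have "eventually (\<lambda>t. integral\<^sup>L gumbel (?s t) = P0 t f x) at_top"
    using eventually_gt_at_top[of "0::real"] by (rule eventually_mono) (simp add: P0_pos)
  ultimately show ?thesis by (rule Lim_transform_eventually)
qed




lemma Gc_deriv:
  "((\<lambda>y. exp (- exp (- (y - c)))) has_real_derivative exp (- exp (- (y - c))) * exp (- (y - c))) (at y)"
  by (auto intro!: derivative_eq_intros)

lemma Gc_deriv_le: "exp (- exp (- (y - c))) * exp (- (y - c)) \<le> (1::real)"
proof -
  let ?u = "exp (- (y - c))"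
  have "?u \<le> exp ?u" using exp_ge_add_one_self[of ?u] by linarith
  then have "?u / exp ?u \<le> 1" by simp
  then show ?thesis by (simp add: exp_minus divide_inverse mult.commute)
qed

lemma Gc_lip: "1-lipschitz_on UNIV (\<lambda>y. exp (- exp (- (y - c))) :: real)"
proof -
  let ?G = "\<lambda>y. exp (- exp (- (y - c))) :: real"
  have *: "dist (?G a) (?G b) \<le> dist a b" if "a < b" for a b
  proof -
    have "\<exists>z. a < z \<and> z < b \<and> ?G b - ?G a = (b - a) * (exp (- exp (- (z - c))) * exp (- (z - c)))"
      by (rule MVT2[OF that]) (rule Gc_deriv)
    then obtain z where "?G b - ?G a = (b - a) * (exp (- exp (- (z - c))) * exp (- (z - c)))"
      by blast
    moreover have "0 \<le> exp (- exp (- (z - c))) * exp (- (z - c))" by simp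
    moreover note Gc_deriv_le[of z c]
    ultimately have "\<bar>?G b - ?G a\<bar> \<le> (b - a) * 1" using that
      by (simp add: abs_mult mult_left_mono)
    then show ?thesis using that by (simp add: dist_real_def abs_minus_commute)
  qed
  show ?thesis
  proof (rule lipschitz_onI)
    fix a b :: real
    show "dist (?G a) (?G b) \<le> 1 * dist a b"
      using *[of a b] *[of b a] by (cases a b rule: linorder_cases) (auto simp: dist_commute)
  qed simp
qed

lemma deriv_lip_bound:
  assumes L: "L-lipschitz_on UNIV (f::real \<Rightarrow> real)" and d: "(f has_real_derivative D) (at y)"
  shows "\<bar>D\<bar> \<le> L"
proof -
  have "((\<lambda>h. (f (y + h) - f y) / h) \<longlongrightarrow> D) (at 0)" using d by (simp add: DERIV_def)
  then have "((\<lambda>h. \<bar>(f (y + h) - f y) / h\<bar>) \<longlongrightarrow> \<bar>D\<bar>) (at 0)" by (rule tendsto_rabs)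
  moreover have "eventually (\<lambda>h. \<bar>(f (y + h) - f y) / h\<bar> \<le> L) (at (0::real))"
  proof (rule eventually_at_filter[THEN iffD2, OF always_eventually], intro allI impI)
    fix h :: real assume "h \<noteq> 0"
    have "\<bar>f (y + h) - f y\<bar> \<le> L * \<bar>h\<bar>" using lipschitz_onD[OF L, of "y + h" y] by (simp add: dist_real_def)
    then show "\<bar>(f (y + h) - f y) / h\<bar> \<le> L" using \<open>h \<noteq> 0\<close> by (simp add: abs_divide divide_le_eq)
  qed
  ultimately show ?thesis by (rule tendsto_upperbound) simp
qed




lemma P0_lip:
  assumes L: "L-lipschitz_on UNIV f" and t: "t \<noteq> 0"
  shows "L-lipschitz_on UNIV (P0 t f)"
proof (rule lipschitz_onI)
  show L0: "0 \<le> L" using L by (rule lipschitz_on_nonneg)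
  fix x y :: real
  let ?c = "ln (1 - exp (-t))"
  let ?u = "\<lambda>z. f (max (x - t) (z + ?c))" and ?v = "\<lambda>z. f (max (y - t) (z + ?c))"
  have iu: "integrable gumbel ?u" by (rule integrable_gumbel_lip[OF lip_maxshift[OF L]])
  have iv: "integrable gumbel ?v" by (rule integrable_gumbel_lip[OF lip_maxshift[OF L]])
  have "dist (P0 t f x) (P0 t f y) = norm (\<integral>z. ?u z - ?v z \<partial>gumbel)"
    using t iu iv by (simp add: P0_pos dist_real_def)
  also have "\<dots> \<le> (\<integral>z. norm (?u z - ?v z) \<partial>gumbel)"
    by (rule integral_norm_bound)
  also have "\<dots> \<le> (\<integral>z. L * dist x y \<partial>gumbel)"
  proof (rule integral_mono)
    show "integrable gumbel (\<lambda>z. norm (?u z - ?v z))" using iu iv by simp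
    show "integrable gumbel (\<lambda>z. L * dist x y)" by simp
    fix z
    have "dist (?u z) (?v z) \<le> L * dist (max (x - t) (z + ?c)) (max (y - t) (z + ?c))"
      using lipschitz_onD[OF L] by simp
    also have "\<dots> \<le> L * dist x y"
      using L0 by (intro mult_left_mono) (auto simp: dist_real_def max_def)
    finally show "norm (?u z - ?v z) \<le> L * dist x y" by (simp add: dist_norm)
  qed
  also have "\<dots> = L * dist x y" using G.prob_space by simp
  finally show "dist (P0 t f x) (P0 t f y) \<le> L * dist x y" .
qed

lemma P0_deriv:
  assumes L: "L-lipschitz_on UNIV f" and t: "t \<noteq> 0" and d: "(f has_real_derivative D) (at y)"
  shows "(P0 t f has_real_derivative D * exp (- exp (- (y - ln (1 - exp (-t)))))) (at (y + t))"
proof -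
  let ?c = "ln (1 - exp (-t))"
  let ?Q = "P0 t f"
  have fm[measurable]: "f \<in> borel_measurable borel" using L by simp
  have L0: "0 \<le> L" using L by (rule lipschitz_on_nonneg)
  have "((\<lambda>h. (?Q (y + t + h) - ?Q (y + t)) / h) \<longlongrightarrow> D * exp (- exp (- (y - ?c)))) (at 0)"
    unfolding tendsto_at_iff_sequentially comp_def
  proof (intro allI impI)
    fix X :: "nat \<Rightarrow> real" assume X0: "\<forall>i. X i \<in> UNIV - {0}" and X: "X \<longlonglongrightarrow> 0"
    let ?s = "\<lambda>i z. (f (max (y + X i) (z + ?c)) - f (max y (z + ?c))) / X i"
    let ?phi = "\<lambda>z. D * indicator {..<y - ?c} z"
    have dq: "(\<lambda>i. (f (y + X i) - f y) / X i) \<longlonglongrightarrow> D"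
      using d X0 X unfolding DERIV_def tendsto_at_iff_sequentially comp_def by blast
    have Xe: "eventually (\<lambda>i. \<bar>X i\<bar> < e) sequentially" if "e > 0" for e
      using X that by (auto simp: tendsto_iff dist_real_def)
    have lim: "(\<lambda>i. integral\<^sup>L gumbel (?s i)) \<longlonglongrightarrow> integral\<^sup>L gumbel ?phi"
    proof (rule integral_dominated_convergence[where w="\<lambda>z. L"])
      show "?phi \<in> borel_measurable gumbel" by simp
      show "?s i \<in> borel_measurable gumbel" for i by simp
      show "integrable gumbel (\<lambda>z. L)" by simp
      have "{y - ?c} \<in> null_sets gumbel"
        using emeasure_gumbel_singleton by (simp add: null_sets_def)
      then have "AE z in gumbel. z \<noteq> y - ?c"
        by (rule AE_I') auto
      then show "AE z in gumbel. (\<lambda>i. ?s i z) \<longlonglongrightarrow> ?phi z"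
      proof (rule eventually_mono)
        fix z assume z: "z \<noteq> y - ?c"
        show "(\<lambda>i. ?s i z) \<longlonglongrightarrow> ?phi z"
        proof (cases "z + ?c < y")
          case True
          have "eventually (\<lambda>i. (f (y + X i) - f y) / X i = ?s i z) sequentially"
          proof -
            have "eventually (\<lambda>i. \<bar>X i\<bar> < y - (z + ?c)) sequentially"
              using True by (intro Xe) simp
            then show ?thesis by (rule eventually_mono) (auto simp: max_def)
          qed
          from Lim_transform_eventually[OF dq this] show ?thesis
            using True by (simp add: indicator_def)
        next
          case False
          then have F: "y < z + ?c" using z by auto
          have "eventually (\<lambda>i. 0 = ?s i z) sequentially"
          proof -
            have "eventually (\<lambda>i. \<bar>X i\<bar> < z + ?c - y) sequentially"
              using F by (intro Xe) simp
            then show ?thesis by (rule eventually_mono) (auto simp: max_def)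
          qed
          from Lim_transform_eventually[OF tendsto_const this] show ?thesis
            using False by (simp add: indicator_def)
        qed
      qed
      show "AE z in gumbel. norm (?s i z) \<le> L" for i
      proof (rule AE_I2)
        fix z
        have "\<bar>f (max (y + X i) (z + ?c)) - f (max y (z + ?c))\<bar>
             \<le> L * \<bar>max (y + X i) (z + ?c) - max y (z + ?c)\<bar>"
          using lipschitz_onD[OF L] by (simp add: dist_real_def)
        also have "\<dots> \<le> L * \<bar>X i\<bar>"
          using L0 by (intro mult_left_mono) (auto simp: max_def)
        finally show "norm (?s i z) \<le> L"
          using X0 by (simp add: abs_divide divide_le_eq mult.commute)
      qed
    qed
    have e1: "integral\<^sup>L gumbel ?phi = D * exp (- exp (- (y - ?c)))"
      using measure_gumbel_lessThan[of "y - ?c"] by simp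
    have e2: "integral\<^sup>L gumbel (?s i) = (?Q (y + t + X i) - ?Q (y + t)) / X i" for i
    proof -
      have i1: "integrable gumbel (\<lambda>z. f (max (y + X i) (z + ?c)))"
        by (rule integrable_gumbel_lip[OF lip_maxshift[OF L]])
      have i2: "integrable gumbel (\<lambda>z. f (max y (z + ?c)))"
        by (rule integrable_gumbel_lip[OF lip_maxshift[OF L]])
      have "integral\<^sup>L gumbel (?s i) = ((\<integral>z. f (max (y + X i) (z + ?c)) \<partial>gumbel) - (\<integral>z. f (max y (z + ?c)) \<partial>gumbel)) / X i"
        using i1 i2 by simp
      also have "\<dots> = (?Q (y + t + X i) - ?Q (y + t)) / X i"
        using t by (simp add: P0_pos algebra_simps)
      finally show ?thesis .
    qed
    show "(\<lambda>i. (?Q (y + t + X i) - ?Q (y + t)) / X i) \<longlonglongrightarrow> D * exp (- exp (- (y - ?c)))"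
      using lim unfolding e1 e2 .
  qed
  then show ?thesis unfolding DERIV_def by simp
qed




lemma P0_Lip2:
  assumes f: "f \<in> Lip2" and t0: "t \<ge> 0"
  shows "P0 t f \<in> Lip2"
proof (cases "t = 0")
  case True then show ?thesis using f by (simp add: P0_zero)
next
  case False
  note t = False
  from f obtain L g K where L: "L-lipschitz_on UNIV f" and K: "K-lipschitz_on UNIV g"
    and ae: "AE x in lborel. (f has_real_derivative g x) (at x)"
    unfolding Lip2_def by blast
  have L0: "0 \<le> L" using L by (rule lipschitz_on_nonneg)
  have K0: "0 \<le> K" using K by (rule lipschitz_on_nonneg)
  let ?c = "ln (1 - exp (-t))"
  define G where "G = (\<lambda>y. exp (- exp (- (y - ?c))) :: real)"
  define cl where "cl = (\<lambda>v::real. max (- L) (min L v))"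
  define g2 where "g2 = (\<lambda>x. cl (g (x - t)) * G (x - t))"
  have G1: "1-lipschitz_on UNIV G" unfolding G_def by (rule Gc_lip)
  have Gb: "0 \<le> G y" "G y \<le> 1" for y unfolding G_def by auto
  have clb: "\<bar>cl v\<bar> \<le> L" for v unfolding cl_def using L0 by auto
  have cll: "\<bar>cl v - cl w\<bar> \<le> \<bar>v - w\<bar>" for v w unfolding cl_def by (auto simp: max_def min_def)
  have "(L + K)-lipschitz_on UNIV g2"
  proof (rule lipschitz_onI)
    show "0 \<le> L + K" using L0 K0 by simp
    fix x y :: real
    let ?a = "x - t" and ?b = "y - t"
    have dG: "\<bar>G ?a - G ?b\<bar> \<le> \<bar>x - y\<bar>"
      using lipschitz_onD[OF G1, of ?a ?b] by (simp add: dist_real_def)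
    have dg: "\<bar>cl (g ?a) - cl (g ?b)\<bar> \<le> K * \<bar>x - y\<bar>"
      using cll[of "g ?a" "g ?b"] lipschitz_onD[OF K, of ?a ?b] by (simp add: dist_real_def)
    have "g2 x - g2 y = cl (g ?a) * (G ?a - G ?b) + G ?b * (cl (g ?a) - cl (g ?b))"
      unfolding g2_def by (simp add: algebra_simps)
    then have "\<bar>g2 x - g2 y\<bar> \<le> \<bar>cl (g ?a)\<bar> * \<bar>G ?a - G ?b\<bar> + \<bar>G ?b\<bar> * \<bar>cl (g ?a) - cl (g ?b)\<bar>"
      by (simp add: abs_mult[symmetric] abs_triangle_ineq)
    also have "\<dots> \<le> L * \<bar>x - y\<bar> + 1 * (K * \<bar>x - y\<bar>)"
      using Gb[of ?b] clb[of "g ?a"] dG dg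
      by (intro add_mono mult_mono) auto
    finally show "dist (g2 x) (g2 y) \<le> (L + K) * dist x y"
      by (simp add: dist_real_def algebra_simps)
  qed
  moreover have "AE x in lborel. (P0 t f has_real_derivative g2 x) (at x)"
  proof -
    from ae obtain N where N: "{x \<in> space lborel. \<not> (f has_real_derivative g x) (at x)} \<subseteq> N"
      "emeasure lborel N = 0" "N \<in> sets lborel"
      by (rule AE_E)
    have "N \<in> null_sets lborel" using N by auto
    then have "{x. x - t \<in> N} \<in> null_sets lborel" by (rule null_sets_translation)
    then show ?thesis
    proof (rule AE_I')
      show "{x \<in> space lborel. \<not> (P0 t f has_real_derivative g2 x) (at x)} \<subseteq> {x. x - t \<in> N}"
      proof safe
        fix x assume nd: "\<not> (P0 t f has_real_derivative g2 x) (at x)"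
        show "x - t \<in> N"
        proof (rule ccontr)
          assume "x - t \<notin> N"
          then have d: "(f has_real_derivative g (x - t)) (at (x - t))" using N(1) by auto
          have "\<bar>g (x - t)\<bar> \<le> L" by (rule deriv_lip_bound[OF L d])
          then have "cl (g (x - t)) = g (x - t)" unfolding cl_def by auto
          then have "g2 x = g (x - t) * exp (- exp (- ((x - t) - ?c)))"
            unfolding g2_def G_def by simp
          with P0_deriv[OF L t d] nd show False by simp
        qed
      qed
    qed
  qed
  ultimately show ?thesis
    using P0_lip[OF L t] unfolding Lip2_def by blast
qed

theorem proposition2p2:
  shows "(\<forall>t\<ge>0. \<forall>f\<in>Lip2. P0 t f \<in> Lip2)
    \<and> (\<forall>t\<ge>0. \<forall>f\<in>Lip2. \<forall>g\<in>Lip2. \<forall>a b::real.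
          P0 t (\<lambda>x. a * f x + b * g x) = (\<lambda>x. a * P0 t f x + b * P0 t g x))
    \<and> (\<forall>f\<in>Lip2. P0 0 f = f)
    \<and> (\<forall>t\<ge>0. \<forall>s\<ge>0. \<forall>f\<in>Lip2. P0 t (P0 s f) = P0 (t + s) f)
    \<and> (\<forall>f\<in>Lip2. \<forall>x. ((\<lambda>t. P0 t f x) \<longlongrightarrow> (\<integral>z. f z \<partial>gumbel)) at_top)
    \<and> (\<forall>t\<ge>0. \<forall>f\<in>Lip2. (\<integral>z. P0 t f z \<partial>gumbel) = (\<integral>z. f z \<partial>gumbel))"
  using P0_Lip2 P0_linear P0_zero P0_semigroup P0_ergodic P0_invariant by blast


end
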